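(* Let $(\mathcal R,\Sigma,\Delta)$ be a right triangulated category with right semi-equivalence. Suppose $\mathcal R$ is idempotent complete and additively finite (finitely many isomorphism classes of indecomposable objects, every object a finite direct sum of indecomposables). Then $\Sigma$ is an autoequivalence of $\mathcal R$; in particular $(\mathcal R,\Sigma,\Delta)$ is a triangulated category.
   Context: A right triangulated category $(\mathcal R,\Sigma,\Delta)$: additive category $\mathcal R$, additive endofunctor $\Sigma$, class $\Delta$ of right triangles $A\to B\to C\to\Sigma A$ satisfying the axioms of a triangulated category except that $\Sigma$ need not be an equivalence and only rotation to the right ($B\xrightarrow{y}C\xrightarrow{z}\Sigma A\xrightarrow{-\Sigma x}\Sigma B$) is required. $\Sigma$ is a right semi-equivalence if it is fully faithful and its essential image $\Sigma\mathcal R$ is closed under extensions (for every right triangle $A\to B\to C\to\Sigma A$ with $A,C\in\Sigma\mathcal R$ also $B\in\Sigma\mathcal R$). *)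

theory Defs
  imports Main
begin

text \<open>A category is given by a set of objects, a set of morphisms, domain and
codomain maps, composition (Comp g f = g after f), identities, and the additive
structure on hom-sets (Add, Zero A B, Neg).\<close>

record ('o,'m) addcat =
  Obj  :: "'o set"
  Mor  :: "'m set"
  Dom  :: "'m \<Rightarrow> 'o"
  Cod  :: "'m \<Rightarrow> 'o"
  Comp :: "'m \<Rightarrow> 'm \<Rightarrow> 'm"
  Id   :: "'o \<Rightarrow> 'm"
  Add  :: "'m \<Rightarrow> 'm \<Rightarrow> 'm"
  Zero :: "'o \<Rightarrow> 'o \<Rightarrow> 'm"
  Neg  :: "'m \<Rightarrow> 'm"

definition hom :: "('o,'m) addcat \<Rightarrow> 'o \<Rightarrow> 'o \<Rightarrow> 'm set" where
  "hom C A B = {f \<in> Mor C. Dom C f = A \<and> Cod C f = B}"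

definition is_category :: "('o,'m) addcat \<Rightarrow> bool" where
  "is_category C \<longleftrightarrow>
     (\<forall>f \<in> Mor C. Dom C f \<in> Obj C \<and> Cod C f \<in> Obj C) \<and>
     (\<forall>A \<in> Obj C. Id C A \<in> hom C A A) \<and>
     (\<forall>A\<in>Obj C. \<forall>B\<in>Obj C. \<forall>D\<in>Obj C. \<forall>f \<in> hom C A B. \<forall>g \<in> hom C B D.
         Comp C g f \<in> hom C A D) \<and>
     (\<forall>A\<in>Obj C. \<forall>B\<in>Obj C. \<forall>D\<in>Obj C. \<forall>E\<in>Obj C.
        \<forall>f \<in> hom C A B. \<forall>g \<in> hom C B D. \<forall>h \<in> hom C D E.
         Comp C h (Comp C g f) = Comp C (Comp C h g) f) \<and>
     (\<forall>A\<in>Obj C. \<forall>B\<in>Obj C. \<forall>f \<in> hom C A B.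
         Comp C f (Id C A) = f \<and> Comp C (Id C B) f = f)"

definition is_preadditive :: "('o,'m) addcat \<Rightarrow> bool" where
  "is_preadditive C \<longleftrightarrow> is_category C \<and>
     (\<forall>A\<in>Obj C. \<forall>B\<in>Obj C.
        Zero C A B \<in> hom C A B \<and>
        (\<forall>f\<in>hom C A B. \<forall>g\<in>hom C A B. Add C f g \<in> hom C A B) \<and>
        (\<forall>f\<in>hom C A B. Neg C f \<in> hom C A B) \<and>
        (\<forall>f\<in>hom C A B. \<forall>g\<in>hom C A B. \<forall>h\<in>hom C A B.
            Add C (Add C f g) h = Add C f (Add C g h)) \<and>
        (\<forall>f\<in>hom C A B. \<forall>g\<in>hom C A B. Add C f g = Add C g f) \<and>
        (\<forall>f\<in>hom C A B. Add C f (Zero C A B) = f) \<and>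
        (\<forall>f\<in>hom C A B. Add C f (Neg C f) = Zero C A B)) \<and>
     (\<forall>A\<in>Obj C. \<forall>B\<in>Obj C. \<forall>D\<in>Obj C.
        (\<forall>f\<in>hom C A B. \<forall>g\<in>hom C B D. \<forall>g'\<in>hom C B D.
            Comp C (Add C g g') f = Add C (Comp C g f) (Comp C g' f)) \<and>
        (\<forall>f\<in>hom C A B. \<forall>f'\<in>hom C A B. \<forall>g\<in>hom C B D.
            Comp C g (Add C f f') = Add C (Comp C g f) (Comp C g f')))"

definition is_zero_obj :: "('o,'m) addcat \<Rightarrow> 'o \<Rightarrow> bool" where
  "is_zero_obj C Z0 \<longleftrightarrow> Z0 \<in> Obj C \<and> Id C Z0 = Zero C Z0 Z0"

definition is_biproduct ::
  "('o,'m) addcat \<Rightarrow> 'o \<Rightarrow> 'o \<Rightarrow> 'o \<Rightarrow> 'm \<Rightarrow> 'm \<Rightarrow> 'm \<Rightarrow> 'm \<Rightarrow> bool" where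
  "is_biproduct C S A1 A2 i1 i2 p1 p2 \<longleftrightarrow>
     S \<in> Obj C \<and> A1 \<in> Obj C \<and> A2 \<in> Obj C \<and>
     i1 \<in> hom C A1 S \<and> i2 \<in> hom C A2 S \<and> p1 \<in> hom C S A1 \<and> p2 \<in> hom C S A2 \<and>
     Comp C p1 i1 = Id C A1 \<and> Comp C p2 i2 = Id C A2 \<and>
     Comp C p1 i2 = Zero C A2 A1 \<and> Comp C p2 i1 = Zero C A1 A2 \<and>
     Add C (Comp C i1 p1) (Comp C i2 p2) = Id C S"

definition is_additive :: "('o,'m) addcat \<Rightarrow> bool" where
  "is_additive C \<longleftrightarrow> is_preadditive C \<and>
     (\<exists>Z0. is_zero_obj C Z0) \<and>
     (\<forall>A1\<in>Obj C. \<forall>A2\<in>Obj C. \<exists>S i1 i2 p1 p2. is_biproduct C S A1 A2 i1 i2 p1 p2)"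

definition is_iso :: "('o,'m) addcat \<Rightarrow> 'o \<Rightarrow> 'o \<Rightarrow> 'm \<Rightarrow> bool" where
  "is_iso C A B f \<longleftrightarrow> f \<in> hom C A B \<and>
     (\<exists>g \<in> hom C B A. Comp C g f = Id C A \<and> Comp C f g = Id C B)"

definition isomorphic :: "('o,'m) addcat \<Rightarrow> 'o \<Rightarrow> 'o \<Rightarrow> bool" where
  "isomorphic C A B \<longleftrightarrow> A \<in> Obj C \<and> B \<in> Obj C \<and> (\<exists>f. is_iso C A B f)"

definition additive_endofunctor ::
  "('o,'m) addcat \<Rightarrow> ('o \<Rightarrow> 'o) \<Rightarrow> ('m \<Rightarrow> 'm) \<Rightarrow> bool" where
  "additive_endofunctor C SO SM \<longleftrightarrow>
     (\<forall>A\<in>Obj C. SO A \<in> Obj C) \<and>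
     (\<forall>A\<in>Obj C. \<forall>B\<in>Obj C. \<forall>f\<in>hom C A B. SM f \<in> hom C (SO A) (SO B)) \<and>
     (\<forall>A\<in>Obj C. SM (Id C A) = Id C (SO A)) \<and>
     (\<forall>A\<in>Obj C. \<forall>B\<in>Obj C. \<forall>D\<in>Obj C. \<forall>f\<in>hom C A B. \<forall>g\<in>hom C B D.
         SM (Comp C g f) = Comp C (SM g) (SM f)) \<and>
     (\<forall>A\<in>Obj C. \<forall>B\<in>Obj C. \<forall>f\<in>hom C A B. \<forall>g\<in>hom C A B.
         SM (Add C f g) = Add C (SM f) (SM g))"

definition fully_faithful ::
  "('o,'m) addcat \<Rightarrow> ('o \<Rightarrow> 'o) \<Rightarrow> ('m \<Rightarrow> 'm) \<Rightarrow> bool" where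
  "fully_faithful C SO SM \<longleftrightarrow>
     (\<forall>A\<in>Obj C. \<forall>B\<in>Obj C. bij_betw SM (hom C A B) (hom C (SO A) (SO B)))"

definition ess_image :: "('o,'m) addcat \<Rightarrow> ('o \<Rightarrow> 'o) \<Rightarrow> 'o set" where
  "ess_image C SO = {X \<in> Obj C. \<exists>A\<in>Obj C. isomorphic C X (SO A)}"

definition essentially_surjective :: "('o,'m) addcat \<Rightarrow> ('o \<Rightarrow> 'o) \<Rightarrow> bool" where
  "essentially_surjective C SO \<longleftrightarrow> ess_image C SO = Obj C"

definition autoequivalence ::
  "('o,'m) addcat \<Rightarrow> ('o \<Rightarrow> 'o) \<Rightarrow> ('m \<Rightarrow> 'm) \<Rightarrow> bool" where
  "autoequivalence C SO SM \<longleftrightarrow>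
     additive_endofunctor C SO SM \<and> fully_faithful C SO SM \<and> essentially_surjective C SO"

text \<open>A (candidate) right triangle A -x-> B -y-> C -z-> SO A, encoded as a tuple
(A, B, C, x, y, z).\<close>
type_synonym ('o,'m) tri = "'o \<times> 'o \<times> 'o \<times> 'm \<times> 'm \<times> 'm"

definition is_tri :: "('o,'m) addcat \<Rightarrow> ('o \<Rightarrow> 'o) \<Rightarrow> ('o,'m) tri \<Rightarrow> bool" where
  "is_tri C SO T = (case T of (A,B,D,x,y,z) \<Rightarrow>
     A \<in> Obj C \<and> B \<in> Obj C \<and> D \<in> Obj C \<and>
     x \<in> hom C A B \<and> y \<in> hom C B D \<and> z \<in> hom C D (SO A))"

definition tri_morph ::
  "('o,'m) addcat \<Rightarrow> ('o \<Rightarrow> 'o) \<Rightarrow> ('m \<Rightarrow> 'm) \<Rightarrow> ('o,'m) tri \<Rightarrow> ('o,'m) tri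
     \<Rightarrow> 'm \<Rightarrow> 'm \<Rightarrow> 'm \<Rightarrow> bool" where
  "tri_morph C SO SM T T' a b c = (case T of (A,B,D,x,y,z) \<Rightarrow> case T' of (A',B',D',x',y',z') \<Rightarrow>
     a \<in> hom C A A' \<and> b \<in> hom C B B' \<and> c \<in> hom C D D' \<and>
     Comp C b x = Comp C x' a \<and> Comp C c y = Comp C y' b \<and>
     Comp C (SM a) z = Comp C z' c)"

definition tri_iso ::
  "('o,'m) addcat \<Rightarrow> ('o \<Rightarrow> 'o) \<Rightarrow> ('m \<Rightarrow> 'm) \<Rightarrow> ('o,'m) tri \<Rightarrow> ('o,'m) tri
     \<Rightarrow> 'm \<Rightarrow> 'm \<Rightarrow> 'm \<Rightarrow> bool" where
  "tri_iso C SO SM T T' a b c \<longleftrightarrow> tri_morph C SO SM T T' a b c \<and>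
     (case T of (A,B,D,_) \<Rightarrow> case T' of (A',B',D',_) \<Rightarrow>
        is_iso C A A' a \<and> is_iso C B B' b \<and> is_iso C D D' c)"

text \<open>Right triangulated category: axioms of a triangulated category
(TR1--TR4, octahedral axiom included) with only right rotation and without
assuming SO is an equivalence.\<close>
definition right_triangulated ::
  "('o,'m) addcat \<Rightarrow> ('o \<Rightarrow> 'o) \<Rightarrow> ('m \<Rightarrow> 'm) \<Rightarrow> ('o,'m) tri set \<Rightarrow> bool" where
  "right_triangulated C SO SM Delta \<longleftrightarrow>
     is_additive C \<and> additive_endofunctor C SO SM \<and>
     (\<forall>T\<in>Delta. is_tri C SO T) \<and>
     \<comment> \<open>RTR1(a): closure under isomorphism of triangles\<close>
     (\<forall>T\<in>Delta. \<forall>T' a b c. is_tri C SO T' \<and> tri_iso C SO SM T T' a b c \<longrightarrow> T' \<in> Delta) \<and>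
     \<comment> \<open>RTR1(b): A -id-> A -> 0 -> SO A is a right triangle\<close>
     (\<forall>A\<in>Obj C. \<forall>Z0. is_zero_obj C Z0 \<longrightarrow>
        (A, A, Z0, Id C A, Zero C A Z0, Zero C Z0 (SO A)) \<in> Delta) \<and>
     \<comment> \<open>RTR1(c): every morphism embeds in a right triangle\<close>
     (\<forall>A\<in>Obj C. \<forall>B\<in>Obj C. \<forall>x\<in>hom C A B. \<exists>D y z. (A,B,D,x,y,z) \<in> Delta) \<and>
     \<comment> \<open>RTR2: rotation to the right\<close>
     (\<forall>A B D x y z. (A,B,D,x,y,z) \<in> Delta \<longrightarrow> (B, D, SO A, y, z, Neg C (SM x)) \<in> Delta) \<and>
     \<comment> \<open>RTR3: completion of morphisms of triangles\<close>
     (\<forall>A B D x y z A' B' D' x' y' z' a b.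
        (A,B,D,x,y,z) \<in> Delta \<and> (A',B',D',x',y',z') \<in> Delta \<and>
        a \<in> hom C A A' \<and> b \<in> hom C B B' \<and> Comp C b x = Comp C x' a \<longrightarrow>
        (\<exists>c. tri_morph C SO SM (A,B,D,x,y,z) (A',B',D',x',y',z') a b c)) \<and>
     \<comment> \<open>RTR4: octahedral axiom\<close>
     (\<forall>A B D x Z' j k E v l i Y' m n.
        (A,B,Z',x,j,k) \<in> Delta \<and> (B,D,E,v,l,i) \<in> Delta \<and>
        (A,D,Y',Comp C v x,m,n) \<in> Delta \<longrightarrow>
        (\<exists>f g. (Z',Y',E,f,g,Comp C (SM j) i) \<in> Delta \<and>
           Comp C f j = Comp C m v \<and> Comp C n f = k \<and>
           Comp C g m = l \<and> Comp C i g = Comp C (SM x) n))"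

definition closed_under_extensions ::
  "('o,'m) addcat \<Rightarrow> ('o,'m) tri set \<Rightarrow> 'o set \<Rightarrow> bool" where
  "closed_under_extensions C Delta S \<longleftrightarrow>
     (\<forall>A B D x y z. (A,B,D,x,y,z) \<in> Delta \<and> A \<in> S \<and> D \<in> S \<longrightarrow> B \<in> S)"

definition right_semi_equivalence ::
  "('o,'m) addcat \<Rightarrow> ('o \<Rightarrow> 'o) \<Rightarrow> ('m \<Rightarrow> 'm) \<Rightarrow> ('o,'m) tri set \<Rightarrow> bool" where
  "right_semi_equivalence C SO SM Delta \<longleftrightarrow>
     fully_faithful C SO SM \<and> closed_under_extensions C Delta (ess_image C SO)"

definition triangulated ::
  "('o,'m) addcat \<Rightarrow> ('o \<Rightarrow> 'o) \<Rightarrow> ('m \<Rightarrow> 'm) \<Rightarrow> ('o,'m) tri set \<Rightarrow> bool" where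
  "triangulated C SO SM Delta \<longleftrightarrow>
     right_triangulated C SO SM Delta \<and> autoequivalence C SO SM \<and>
     (\<forall>A B D x y z. is_tri C SO (A,B,D,x,y,z) \<and>
        (B, D, SO A, y, z, Neg C (SM x)) \<in> Delta \<longrightarrow> (A,B,D,x,y,z) \<in> Delta)"

definition idempotent_complete :: "('o,'m) addcat \<Rightarrow> bool" where
  "idempotent_complete C \<longleftrightarrow>
     (\<forall>A\<in>Obj C. \<forall>e\<in>hom C A A. Comp C e e = e \<longrightarrow>
        (\<exists>B\<in>Obj C. \<exists>r\<in>hom C A B. \<exists>s\<in>hom C B A.
            Comp C s r = e \<and> Comp C r s = Id C B))"

definition indecomposable :: "('o,'m) addcat \<Rightarrow> 'o \<Rightarrow> bool" where
  "indecomposable C A \<longleftrightarrow> A \<in> Obj C \<and> \<not> is_zero_obj C A \<and>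
     (\<forall>B1 B2 i1 i2 p1 p2. is_biproduct C A B1 B2 i1 i2 p1 p2 \<longrightarrow>
        is_zero_obj C B1 \<or> is_zero_obj C B2)"

inductive fin_dsum_indec :: "('o,'m) addcat \<Rightarrow> 'o \<Rightarrow> bool" for C where
  zero: "is_zero_obj C Z0 \<Longrightarrow> fin_dsum_indec C Z0"
| indec: "indecomposable C A \<Longrightarrow> fin_dsum_indec C A"
| sum: "is_biproduct C S A1 A2 i1 i2 p1 p2 \<Longrightarrow> fin_dsum_indec C A1 \<Longrightarrow>
        fin_dsum_indec C A2 \<Longrightarrow> fin_dsum_indec C S"

definition additively_finite :: "('o,'m) addcat \<Rightarrow> bool" where
  "additively_finite C \<longleftrightarrow>
     (\<exists>F. finite F \<and> F \<subseteq> Obj C \<and>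
        (\<forall>A. indecomposable C A \<longrightarrow> (\<exists>B\<in>F. isomorphic C A B))) \<and>
     (\<forall>X\<in>Obj C. fin_dsum_indec C X)"

end

theory Submission
  imports Defs
begin

locale pa =
  fixes C :: "('o,'m) addcat"
  assumes pa: "is_preadditive C"
begin

lemma cat: "is_category C" using pa unfolding is_preadditive_def by simp

lemma CAT: "\<forall>f \<in> Mor C. Dom C f \<in> Obj C \<and> Cod C f \<in> Obj C"
     "\<forall>A \<in> Obj C. Id C A \<in> hom C A A"
     "\<forall>A\<in>Obj C. \<forall>B\<in>Obj C. \<forall>D\<in>Obj C. \<forall>f \<in> hom C A B. \<forall>g \<in> hom C B D.
         Comp C g f \<in> hom C A D"
     "\<forall>A\<in>Obj C. \<forall>B\<in>Obj C. \<forall>D\<in>Obj C. \<forall>E\<in>Obj C.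
        \<forall>f \<in> hom C A B. \<forall>g \<in> hom C B D. \<forall>h \<in> hom C D E.
         Comp C h (Comp C g f) = Comp C (Comp C h g) f"
     "\<forall>A\<in>Obj C. \<forall>B\<in>Obj C. \<forall>f \<in> hom C A B.
         Comp C f (Id C A) = f \<and> Comp C (Id C B) f = f"
  using cat unfolding is_category_def by blast+

lemma GRP: "\<forall>A\<in>Obj C. \<forall>B\<in>Obj C.
        Zero C A B \<in> hom C A B \<and>
        (\<forall>f\<in>hom C A B. \<forall>g\<in>hom C A B. Add C f g \<in> hom C A B) \<and>
        (\<forall>f\<in>hom C A B. Neg C f \<in> hom C A B) \<and>
        (\<forall>f\<in>hom C A B. \<forall>g\<in>hom C A B. \<forall>h\<in>hom C A B.
            Add C (Add C f g) h = Add C f (Add C g h)) \<and>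
        (\<forall>f\<in>hom C A B. \<forall>g\<in>hom C A B. Add C f g = Add C g f) \<and>
        (\<forall>f\<in>hom C A B. Add C f (Zero C A B) = f) \<and>
        (\<forall>f\<in>hom C A B. Add C f (Neg C f) = Zero C A B)" (is ?GRP)
  and DIS: "\<forall>A\<in>Obj C. \<forall>B\<in>Obj C. \<forall>D\<in>Obj C.
        (\<forall>f\<in>hom C A B. \<forall>g\<in>hom C B D. \<forall>g'\<in>hom C B D.
            Comp C (Add C g g') f = Add C (Comp C g f) (Comp C g' f)) \<and>
        (\<forall>f\<in>hom C A B. \<forall>f'\<in>hom C A B. \<forall>g\<in>hom C B D.
            Comp C g (Add C f f') = Add C (Comp C g f) (Comp C g f'))" (is ?DIS)
proof -
  show "?GRP" using pa[unfolded is_preadditive_def] by (rule conjunct2[THEN conjunct1])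
  show "?DIS" using pa[unfolded is_preadditive_def] by (rule conjunct2[THEN conjunct2])
qed

lemma hom_objs: "f \<in> hom C A B \<Longrightarrow> A \<in> Obj C \<and> B \<in> Obj C"
  using CAT(1) unfolding hom_def by auto

lemma hom_objA: "f \<in> hom C A B \<Longrightarrow> A \<in> Obj C" using hom_objs by blast
lemma hom_objB: "f \<in> hom C A B \<Longrightarrow> B \<in> Obj C" using hom_objs by blast

lemma id_hom[intro,simp]: "A \<in> Obj C \<Longrightarrow> Id C A \<in> hom C A A"
  using CAT(2) by blast

lemma comp_hom[intro]: "f \<in> hom C A B \<Longrightarrow> g \<in> hom C B D \<Longrightarrow> Comp C g f \<in> hom C A D"
  using CAT(3) hom_objA hom_objB by blast

lemma assoc: "f \<in> hom C A B \<Longrightarrow> g \<in> hom C B D \<Longrightarrow> h \<in> hom C D E \<Longrightarrow>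
   Comp C h (Comp C g f) = Comp C (Comp C h g) f"
  using CAT(4) hom_objA hom_objB by blast

lemma id_right: "f \<in> hom C A B \<Longrightarrow> Comp C f (Id C A) = f"
  using CAT(5) hom_objA hom_objB by blast
lemma id_left: "f \<in> hom C A B \<Longrightarrow> Comp C (Id C B) f = f"
  using CAT(5) hom_objA hom_objB by blast

lemma zero_hom[intro,simp]: "A \<in> Obj C \<Longrightarrow> B \<in> Obj C \<Longrightarrow> Zero C A B \<in> hom C A B"
  using GRP by blast
lemma add_hom[intro]: "f \<in> hom C A B \<Longrightarrow> g \<in> hom C A B \<Longrightarrow> Add C f g \<in> hom C A B"
  using GRP hom_objA hom_objB by blast
lemma neg_hom[intro]: "f \<in> hom C A B \<Longrightarrow> Neg C f \<in> hom C A B"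
  using GRP hom_objA hom_objB by blast
lemma add_assoc: "f \<in> hom C A B \<Longrightarrow> g \<in> hom C A B \<Longrightarrow> h \<in> hom C A B \<Longrightarrow>
   Add C (Add C f g) h = Add C f (Add C g h)"
  using GRP hom_objA hom_objB by blast
lemma add_comm: "f \<in> hom C A B \<Longrightarrow> g \<in> hom C A B \<Longrightarrow> Add C f g = Add C g f"
  using GRP hom_objA hom_objB by blast
lemma add_zero: "f \<in> hom C A B \<Longrightarrow> Add C f (Zero C A B) = f"
  using GRP hom_objA hom_objB by blast
lemma add_neg: "f \<in> hom C A B \<Longrightarrow> Add C f (Neg C f) = Zero C A B"
  using GRP hom_objA hom_objB by blast
lemma distr_l: "f \<in> hom C A B \<Longrightarrow> g \<in> hom C B D \<Longrightarrow> g' \<in> hom C B D \<Longrightarrow>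
   Comp C (Add C g g') f = Add C (Comp C g f) (Comp C g' f)"
  using DIS hom_objA hom_objB by blast
lemma distr_r: "f \<in> hom C A B \<Longrightarrow> f' \<in> hom C A B \<Longrightarrow> g \<in> hom C B D \<Longrightarrow>
   Comp C g (Add C f f') = Add C (Comp C g f) (Comp C g f')"
  using DIS hom_objA hom_objB by blast

lemma zero_add: "f \<in> hom C A B \<Longrightarrow> Add C (Zero C A B) f = f"
  by (metis add_comm add_zero hom_objs zero_hom)

lemma add_cancel: assumes "f \<in> hom C A B" "g \<in> hom C A B" "h \<in> hom C A B"
  and "Add C f g = Add C f h" shows "g = h"
proof -
  have "g = Add C (Add C (Neg C f) f) g"
    using assms by (metis add_comm add_neg neg_hom zero_add)
  also have "\<dots> = Add C (Neg C f) (Add C f g)" using assms by (intro add_assoc) auto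
  also have "\<dots> = Add C (Neg C f) (Add C f h)" using assms by simp
  also have "\<dots> = Add C (Add C (Neg C f) f) h" using assms by (intro add_assoc[symmetric]) auto
  also have "\<dots> = h" using assms by (metis add_comm add_neg neg_hom zero_add)
  finally show ?thesis .
qed

lemma double_zero: "x \<in> hom C A B \<Longrightarrow> Add C x x = x \<Longrightarrow> x = Zero C A B"
  by (metis add_cancel add_zero hom_objs zero_hom)

lemma comp_zero_r: assumes "g \<in> hom C B D" "A \<in> Obj C" shows "Comp C g (Zero C A B) = Zero C A D"
proof -
  have B: "B \<in> Obj C" using assms hom_objs by blast
  have "Comp C g (Zero C A B) = Comp C g (Add C (Zero C A B) (Zero C A B))"
    using assms B by (simp add: add_zero[of "Zero C _ _"])
  also have "\<dots> = Add C (Comp C g (Zero C A B)) (Comp C g (Zero C A B))"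
    using assms B by (intro distr_r) auto
  finally show ?thesis using assms B by (metis double_zero zero_hom comp_hom)
qed

lemma comp_zero_l: assumes "f \<in> hom C A B" "D \<in> Obj C" shows "Comp C (Zero C B D) f = Zero C A D"
proof -
  have B: "B \<in> Obj C" using assms hom_objs by blast
  have "Comp C (Zero C B D) f = Comp C (Add C (Zero C B D) (Zero C B D)) f"
    using assms B by (simp add: add_zero[of "Zero C _ _"])
  also have "\<dots> = Add C (Comp C (Zero C B D) f) (Comp C (Zero C B D) f)"
    using assms B hom_objA by (intro distr_l) auto
  finally show ?thesis using assms B by (metis double_zero zero_hom comp_hom hom_objs)
qed

lemma neg_unique: "f \<in> hom C A B \<Longrightarrow> g \<in> hom C A B \<Longrightarrow> Add C f g = Zero C A B \<Longrightarrow> g = Neg C f"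
  by (metis add_cancel add_neg neg_hom)

lemma neg_neg: "f \<in> hom C A B \<Longrightarrow> Neg C (Neg C f) = f"
  by (metis add_comm add_neg neg_hom neg_unique)

lemma neg_inj: "f \<in> hom C A B \<Longrightarrow> g \<in> hom C A B \<Longrightarrow> Neg C f = Neg C g \<Longrightarrow> f = g"
  by (metis neg_neg)

lemma comp_neg_r: assumes "f \<in> hom C A B" "g \<in> hom C B D"
  shows "Comp C g (Neg C f) = Neg C (Comp C g f)"
proof -
  have "Add C (Comp C g f) (Comp C g (Neg C f)) = Zero C A D"
    using assms by (metis add_neg distr_r neg_hom comp_zero_r hom_objs)
  thus ?thesis using assms by (meson neg_unique comp_hom neg_hom)
qed

lemma comp_neg_l: assumes "f \<in> hom C A B" "g \<in> hom C B D"
  shows "Comp C (Neg C g) f = Neg C (Comp C g f)"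
proof -
  have "Add C (Comp C g f) (Comp C (Neg C g) f) = Zero C A D"
    using assms by (metis add_neg distr_l neg_hom comp_zero_l hom_objs)
  thus ?thesis using assms by (meson neg_unique comp_hom neg_hom)
qed

lemma sub_zero: assumes "f \<in> hom C A B" "g \<in> hom C A B" "Add C f (Neg C g) = Zero C A B"
  shows "f = g"
  using assms by (metis neg_neg neg_hom neg_unique)

definition "zobj Z \<longleftrightarrow> is_zero_obj C Z"

lemma zero_from: assumes "is_zero_obj C Z" "f \<in> hom C Z B" shows "f = Zero C Z B"
proof -
  have "f = Comp C f (Id C Z)" using assms id_right by metis
  also have "\<dots> = Comp C f (Zero C Z Z)" using assms unfolding is_zero_obj_def by simp
  also have "\<dots> = Zero C Z B" using assms comp_zero_r unfolding is_zero_obj_def by blast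
  finally show ?thesis .
qed

lemma zero_to: assumes "is_zero_obj C Z" "f \<in> hom C A Z" shows "f = Zero C A Z"
proof -
  have "f = Comp C (Id C Z) f" using assms id_left by metis
  also have "\<dots> = Comp C (Zero C Z Z) f" using assms unfolding is_zero_obj_def by simp
  also have "\<dots> = Zero C A Z" using assms comp_zero_l unfolding is_zero_obj_def by blast
  finally show ?thesis .
qed

lemma iso_refl: "A \<in> Obj C \<Longrightarrow> isomorphic C A A"
  unfolding isomorphic_def is_iso_def by (metis id_hom id_left)

lemma iso_sym: "isomorphic C A B \<Longrightarrow> isomorphic C B A"
  unfolding isomorphic_def is_iso_def by blast

lemma iso_trans: assumes "isomorphic C A B" "isomorphic C B D" shows "isomorphic C A D"
proof -
  obtain f g where f: "f \<in> hom C A B" "g \<in> hom C B A" "Comp C g f = Id C A" "Comp C f g = Id C B"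
    using assms unfolding isomorphic_def is_iso_def by blast
  obtain f' g' where f': "f' \<in> hom C B D" "g' \<in> hom C D B" "Comp C g' f' = Id C B" "Comp C f' g' = Id C D"
    using assms unfolding isomorphic_def is_iso_def by blast
  have 1: "Comp C (Comp C g g') (Comp C f' f) = Id C A"
  proof -
    have "Comp C (Comp C g g') (Comp C f' f) = Comp C g (Comp C g' (Comp C f' f))"
      using f f' by (metis assoc comp_hom)
    also have "\<dots> = Comp C g (Comp C (Comp C g' f') f)" using f f' by (metis assoc)
    also have "\<dots> = Id C A" using f f' by (simp add: id_left)
    finally show ?thesis .
  qed
  have 2: "Comp C (Comp C f' f) (Comp C g g') = Id C D"
  proof -
    have "Comp C (Comp C f' f) (Comp C g g') = Comp C f' (Comp C f (Comp C g g'))"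
      using f f' by (metis assoc comp_hom)
    also have "\<dots> = Comp C f' (Comp C (Comp C f g) g')" using f f' by (metis assoc)
    also have "\<dots> = Id C D" using f f' by (simp add: id_left)
    finally show ?thesis .
  qed
  show ?thesis using assms 1 2 f f' unfolding isomorphic_def is_iso_def by blast
qed

lemma zero_objs_iso: assumes "is_zero_obj C Z" "is_zero_obj C Z'" shows "isomorphic C Z Z'"
proof -
  have o: "Z \<in> Obj C" "Z' \<in> Obj C" using assms unfolding is_zero_obj_def by auto
  have h1: "Comp C (Zero C Z' Z) (Zero C Z Z') \<in> hom C Z Z" using o by blast
  have h2: "Comp C (Zero C Z Z') (Zero C Z' Z) \<in> hom C Z' Z'" using o by blast
  have "Comp C (Zero C Z' Z) (Zero C Z Z') = Id C Z"
    using zero_from[OF assms(1) h1] assms(1) unfolding is_zero_obj_def by simp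
  moreover have "Comp C (Zero C Z Z') (Zero C Z' Z) = Id C Z'"
    using zero_from[OF assms(2) h2] assms(2) unfolding is_zero_obj_def by simp
  ultimately show ?thesis using o unfolding isomorphic_def is_iso_def by blast
qed

end

context pa begin

lemma hom_iff: "f \<in> hom C A B \<longleftrightarrow> f \<in> Mor C \<and> Dom C f = A \<and> Cod C f = B"
  unfolding hom_def by auto

lemma homI: "f \<in> Mor C \<Longrightarrow> f \<in> hom C (Dom C f) (Cod C f)" unfolding hom_def by auto

lemma obj_dom[simp]: "f \<in> Mor C \<Longrightarrow> Dom C f \<in> Obj C" using CAT(1) by blast
lemma obj_cod[simp]: "f \<in> Mor C \<Longrightarrow> Cod C f \<in> Obj C" using CAT(1) by blast

lemma mor_comp[simp]: "f \<in> Mor C \<Longrightarrow> g \<in> Mor C \<Longrightarrow> Cod C f = Dom C g \<Longrightarrow> Comp C g f \<in> Mor C"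
  and dom_comp[simp]: "f \<in> Mor C \<Longrightarrow> g \<in> Mor C \<Longrightarrow> Cod C f = Dom C g \<Longrightarrow> Dom C (Comp C g f) = Dom C f"
  and cod_comp[simp]: "f \<in> Mor C \<Longrightarrow> g \<in> Mor C \<Longrightarrow> Cod C f = Dom C g \<Longrightarrow> Cod C (Comp C g f) = Cod C g"
proof -
  assume a: "f \<in> Mor C" "g \<in> Mor C" "Cod C f = Dom C g"
  have 1: "f \<in> hom C (Dom C f) (Dom C g)" using a homI[of f] by simp
  have 2: "g \<in> hom C (Dom C g) (Cod C g)" using a homI[of g] by simp
  show "Comp C g f \<in> Mor C" "Dom C (Comp C g f) = Dom C f" "Cod C (Comp C g f) = Cod C g"
    using comp_hom[OF 1 2] unfolding hom_iff by auto
qed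

lemma mor_id[simp]: "A \<in> Obj C \<Longrightarrow> Id C A \<in> Mor C"
  and dom_id[simp]: "A \<in> Obj C \<Longrightarrow> Dom C (Id C A) = A"
  and cod_id[simp]: "A \<in> Obj C \<Longrightarrow> Cod C (Id C A) = A"
  using id_hom[of A] unfolding hom_iff by auto

lemma mor_zero[simp]: "A \<in> Obj C \<Longrightarrow> B \<in> Obj C \<Longrightarrow> Zero C A B \<in> Mor C"
  and dom_zero[simp]: "A \<in> Obj C \<Longrightarrow> B \<in> Obj C \<Longrightarrow> Dom C (Zero C A B) = A"
  and cod_zero[simp]: "A \<in> Obj C \<Longrightarrow> B \<in> Obj C \<Longrightarrow> Cod C (Zero C A B) = B"
  using zero_hom[of A B] unfolding hom_iff by auto

lemma mor_add[simp]: "f \<in> Mor C \<Longrightarrow> g \<in> Mor C \<Longrightarrow> Dom C g = Dom C f \<Longrightarrow> Cod C g = Cod C f \<Longrightarrow> Add C f g \<in> Mor C"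
  and dom_add[simp]: "f \<in> Mor C \<Longrightarrow> g \<in> Mor C \<Longrightarrow> Dom C g = Dom C f \<Longrightarrow> Cod C g = Cod C f \<Longrightarrow> Dom C (Add C f g) = Dom C f"
  and cod_add[simp]: "f \<in> Mor C \<Longrightarrow> g \<in> Mor C \<Longrightarrow> Dom C g = Dom C f \<Longrightarrow> Cod C g = Cod C f \<Longrightarrow> Cod C (Add C f g) = Cod C f"
proof -
  assume a: "f \<in> Mor C" "g \<in> Mor C" "Dom C g = Dom C f" "Cod C g = Cod C f"
  have 1: "f \<in> hom C (Dom C f) (Cod C f)" using a homI[of f] by simp
  have 2: "g \<in> hom C (Dom C f) (Cod C f)" using a homI[of g] by simp
  show "Add C f g \<in> Mor C" "Dom C (Add C f g) = Dom C f" "Cod C (Add C f g) = Cod C f"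
    using add_hom[OF 1 2] unfolding hom_iff by auto
qed

lemma mor_neg[simp]: "f \<in> Mor C \<Longrightarrow> Neg C f \<in> Mor C"
  and dom_neg[simp]: "f \<in> Mor C \<Longrightarrow> Dom C (Neg C f) = Dom C f"
  and cod_neg[simp]: "f \<in> Mor C \<Longrightarrow> Cod C (Neg C f) = Cod C f"
  using neg_hom[OF homI[of f]] unfolding hom_iff by auto

lemma c_assoc[simp]: "f \<in> Mor C \<Longrightarrow> g \<in> Mor C \<Longrightarrow> h \<in> Mor C \<Longrightarrow> Cod C f = Dom C g \<Longrightarrow> Cod C g = Dom C h \<Longrightarrow>
   Comp C (Comp C h g) f = Comp C h (Comp C g f)"
proof -
  assume a: "f \<in> Mor C" "g \<in> Mor C" "h \<in> Mor C" "Cod C f = Dom C g" "Cod C g = Dom C h"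
  have 1: "f \<in> hom C (Dom C f) (Dom C g)" using a homI[of f] by simp
  have 2: "g \<in> hom C (Dom C g) (Dom C h)" using a homI[of g] by simp
  have 3: "h \<in> hom C (Dom C h) (Cod C h)" using a homI[of h] by simp
  show ?thesis by (rule assoc[OF 1 2 3, symmetric])
qed

lemma c_idl[simp]: "f \<in> Mor C \<Longrightarrow> Cod C f = B \<Longrightarrow> Comp C (Id C B) f = f"
  using id_left[OF homI[of f]] by auto
lemma c_idr[simp]: "f \<in> Mor C \<Longrightarrow> Dom C f = A \<Longrightarrow> Comp C f (Id C A) = f"
  using id_right[OF homI[of f]] by auto

lemma c_zr[simp]: "g \<in> Mor C \<Longrightarrow> A \<in> Obj C \<Longrightarrow> Dom C g = B \<Longrightarrow> Comp C g (Zero C A B) = Zero C A (Cod C g)"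
  using comp_zero_r[OF homI[of g]] by auto
lemma c_zl[simp]: "f \<in> Mor C \<Longrightarrow> D \<in> Obj C \<Longrightarrow> Cod C f = B \<Longrightarrow> Comp C (Zero C B D) f = Zero C (Dom C f) D"
  using comp_zero_l[OF homI[of f]] by auto

lemma c_distl[simp]: "f \<in> Mor C \<Longrightarrow> g \<in> Mor C \<Longrightarrow> g' \<in> Mor C \<Longrightarrow> Cod C f = Dom C g \<Longrightarrow>
   Dom C g' = Dom C g \<Longrightarrow> Cod C g' = Cod C g \<Longrightarrow>
   Comp C (Add C g g') f = Add C (Comp C g f) (Comp C g' f)"
proof -
  assume a: "f \<in> Mor C" "g \<in> Mor C" "g' \<in> Mor C" "Cod C f = Dom C g" "Dom C g' = Dom C g" "Cod C g' = Cod C g"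
  have 1: "f \<in> hom C (Dom C f) (Dom C g)" using a homI[of f] by simp
  have 2: "g \<in> hom C (Dom C g) (Cod C g)" using a homI[of g] by simp
  have 3: "g' \<in> hom C (Dom C g) (Cod C g)" using a homI[of g'] by simp
  show ?thesis by (rule distr_l[OF 1 2 3])
qed
lemma c_distr[simp]: "f \<in> Mor C \<Longrightarrow> f' \<in> Mor C \<Longrightarrow> g \<in> Mor C \<Longrightarrow> Cod C f = Dom C g \<Longrightarrow>
   Dom C f' = Dom C f \<Longrightarrow> Cod C f' = Cod C f \<Longrightarrow>
   Comp C g (Add C f f') = Add C (Comp C g f) (Comp C g f')"
proof -
  assume a: "f \<in> Mor C" "f' \<in> Mor C" "g \<in> Mor C" "Cod C f = Dom C g" "Dom C f' = Dom C f" "Cod C f' = Cod C f"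
  have 1: "f \<in> hom C (Dom C f) (Dom C g)" using a homI[of f] by simp
  have 2: "f' \<in> hom C (Dom C f) (Dom C g)" using a homI[of f'] by simp
  have 3: "g \<in> hom C (Dom C g) (Cod C g)" using a homI[of g] by simp
  show ?thesis by (rule distr_r[OF 1 2 3])
qed

lemma c_negr[simp]: "f \<in> Mor C \<Longrightarrow> g \<in> Mor C \<Longrightarrow> Cod C f = Dom C g \<Longrightarrow>
   Comp C g (Neg C f) = Neg C (Comp C g f)"
  using comp_neg_r[OF homI[of f], of g "Cod C g"] unfolding hom_iff by auto
lemma c_negl[simp]: "f \<in> Mor C \<Longrightarrow> g \<in> Mor C \<Longrightarrow> Cod C f = Dom C g \<Longrightarrow>
   Comp C (Neg C g) f = Neg C (Comp C g f)"
  using comp_neg_l[OF homI[of f], of g "Cod C g"] unfolding hom_iff by auto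

lemma c_negneg[simp]: "f \<in> Mor C \<Longrightarrow> Neg C (Neg C f) = f"
  using neg_neg[OF homI[of f]] by auto

lemma c_addz[simp]: "f \<in> Mor C \<Longrightarrow> Dom C f = A \<Longrightarrow> Cod C f = B \<Longrightarrow> Add C f (Zero C A B) = f"
  using add_zero[OF homI[of f]] by auto
lemma c_zadd[simp]: "f \<in> Mor C \<Longrightarrow> Dom C f = A \<Longrightarrow> Cod C f = B \<Longrightarrow> Add C (Zero C A B) f = f"
  using zero_add[OF homI[of f]] by auto
lemma c_addneg[simp]: "f \<in> Mor C \<Longrightarrow> Add C f (Neg C f) = Zero C (Dom C f) (Cod C f)"
  using add_neg[OF homI[of f]] by auto

lemma test: assumes "f \<in> hom C A B" "g \<in> hom C B A" "Comp C g f = Id C A" "h \<in> hom C B E"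
  shows "Comp C (Comp C h (Comp C f g)) f = Comp C h f"
proof -
  have "Comp C (Comp C h (Comp C f g)) f = Comp C h (Comp C f (Comp C g f))"
    using assms by (simp add: hom_iff)
  also have "\<dots> = Comp C h f" using assms by (simp add: hom_iff)
  finally show ?thesis .
qed

end

context pa begin

lemma assoc_rule: assumes "Comp C g f = h" "f \<in> Mor C" "g \<in> Mor C" "Cod C f = Dom C g"
  shows "x \<in> Mor C \<Longrightarrow> Cod C x = Dom C f \<Longrightarrow> Comp C g (Comp C f x) = Comp C h x"
  using assms c_assoc[of x f g] by simp

lemma bip_swap: "is_biproduct C S A1 A2 i1 i2 p1 p2 \<Longrightarrow> is_biproduct C S A2 A1 i2 i1 p2 p1"
  unfolding is_biproduct_def by (metis add_comm comp_hom)

lemma bip_transport: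
  assumes b: "is_biproduct C S A1 A2 i1 i2 p1 p2"
    and f: "f1 \<in> hom C A1 A1'" "g1 \<in> hom C A1' A1" "Comp C g1 f1 = Id C A1" "Comp C f1 g1 = Id C A1'"
  shows "is_biproduct C S A1' A2 (Comp C i1 g1) i2 (Comp C f1 p1) p2"
proof -
  have bb: "S \<in> Obj C" "A1 \<in> Obj C" "A2 \<in> Obj C" "i1 \<in> hom C A1 S" "i2 \<in> hom C A2 S" "p1 \<in> hom C S A1" "p2 \<in> hom C S A2"
     "Comp C p1 i1 = Id C A1" "Comp C p2 i2 = Id C A2"
     "Comp C p1 i2 = Zero C A2 A1" "Comp C p2 i1 = Zero C A1 A2"
     "Add C (Comp C i1 p1) (Comp C i2 p2) = Id C S" using b unfolding is_biproduct_def by auto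
  note h = bb(4-7)[unfolded hom_iff] f(1,2)[unfolded hom_iff]
  have A1': "A1' \<in> Obj C" using f hom_objs by blast
  note r = assoc_rule[OF bb(8)] assoc_rule[OF bb(11)] assoc_rule[OF f(3)]
  show ?thesis unfolding is_biproduct_def using bb h A1' f
    by (simp add: hom_iff r)
qed

lemma bip_unique:
  assumes b: "is_biproduct C S A1 A2 i1 i2 p1 p2" and b': "is_biproduct C S' A1 A2 i1' i2' p1' p2'"
  shows "isomorphic C S S'"
proof -
  have bb: "S \<in> Obj C" "A1 \<in> Obj C" "A2 \<in> Obj C" "i1 \<in> hom C A1 S" "i2 \<in> hom C A2 S" "p1 \<in> hom C S A1" "p2 \<in> hom C S A2"
     "Comp C p1 i1 = Id C A1" "Comp C p2 i2 = Id C A2"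
     "Comp C p1 i2 = Zero C A2 A1" "Comp C p2 i1 = Zero C A1 A2"
     "Add C (Comp C i1 p1) (Comp C i2 p2) = Id C S" using b unfolding is_biproduct_def by auto
  have bb': "S' \<in> Obj C" "i1' \<in> hom C A1 S'" "i2' \<in> hom C A2 S'" "p1' \<in> hom C S' A1" "p2' \<in> hom C S' A2"
     "Comp C p1' i1' = Id C A1" "Comp C p2' i2' = Id C A2"
     "Comp C p1' i2' = Zero C A2 A1" "Comp C p2' i1' = Zero C A1 A2"
     "Add C (Comp C i1' p1') (Comp C i2' p2') = Id C S'" using b' unfolding is_biproduct_def by auto
  note h = bb(4-7)[unfolded hom_iff] bb'(2-5)[unfolded hom_iff]
  note r = assoc_rule[OF bb(8)] assoc_rule[OF bb(9)] assoc_rule[OF bb(10)] assoc_rule[OF bb(11)]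
     assoc_rule[OF bb'(6)] assoc_rule[OF bb'(7)] assoc_rule[OF bb'(8)] assoc_rule[OF bb'(9)]
  let ?M = "Add C (Comp C i1' p1) (Comp C i2' p2)"
  let ?N = "Add C (Comp C i1 p1') (Comp C i2 p2')"
  have "Comp C ?N ?M = Id C S" using h bb bb' by (simp add: r)
  moreover have "Comp C ?M ?N = Id C S'" using h bb bb' by (simp add: r)
  moreover have "?M \<in> hom C S S'" "?N \<in> hom C S' S" using h bb bb' by (simp_all add: hom_iff)
  ultimately show ?thesis using bb bb' unfolding isomorphic_def is_iso_def by blast
qed

lemma bip_iso:
  assumes b: "is_biproduct C S A1 A2 i1 i2 p1 p2" and b': "is_biproduct C S' A1' A2' i1' i2' p1' p2'"
    and i1: "isomorphic C A1 A1'" and i2: "isomorphic C A2 A2'"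
  shows "isomorphic C S S'"
proof -
  obtain f1 g1 where f1: "f1 \<in> hom C A1 A1'" "g1 \<in> hom C A1' A1" "Comp C g1 f1 = Id C A1" "Comp C f1 g1 = Id C A1'"
    using i1 unfolding isomorphic_def is_iso_def by blast
  obtain f2 g2 where f2: "f2 \<in> hom C A2 A2'" "g2 \<in> hom C A2' A2" "Comp C g2 f2 = Id C A2" "Comp C f2 g2 = Id C A2'"
    using i2 unfolding isomorphic_def is_iso_def by blast
  have "is_biproduct C S A1' A2 (Comp C i1 g1) i2 (Comp C f1 p1) p2" by (rule bip_transport[OF b f1])
  hence "is_biproduct C S A2 A1' i2 (Comp C i1 g1) p2 (Comp C f1 p1)" by (rule bip_swap)
  hence "is_biproduct C S A2' A1' (Comp C i2 g2) (Comp C i1 g1) (Comp C f2 p2) (Comp C f1 p1)"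
    by (rule bip_transport[OF _ f2])
  hence "is_biproduct C S A1' A2' (Comp C i1 g1) (Comp C i2 g2) (Comp C f1 p1) (Comp C f2 p2)"
    by (rule bip_swap)
  thus ?thesis using b' bip_unique by blast
qed

end

locale ffun = pa C for C :: "('o,'m) addcat" +
  fixes SO :: "'o \<Rightarrow> 'o" and SM :: "'m \<Rightarrow> 'm"
  assumes F: "additive_endofunctor C SO SM" and FF: "fully_faithful C SO SM"
begin

lemma FP: "\<forall>A\<in>Obj C. SO A \<in> Obj C"
  "\<forall>A\<in>Obj C. \<forall>B\<in>Obj C. \<forall>f\<in>hom C A B. SM f \<in> hom C (SO A) (SO B)"
  "\<forall>A\<in>Obj C. SM (Id C A) = Id C (SO A)"
  "\<forall>A\<in>Obj C. \<forall>B\<in>Obj C. \<forall>D\<in>Obj C. \<forall>f\<in>hom C A B. \<forall>g\<in>hom C B D.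
         SM (Comp C g f) = Comp C (SM g) (SM f)"
  "\<forall>A\<in>Obj C. \<forall>B\<in>Obj C. \<forall>f\<in>hom C A B. \<forall>g\<in>hom C A B.
         SM (Add C f g) = Add C (SM f) (SM g)"
  using F[unfolded additive_endofunctor_def]
  by (rule conjunct1, rule conjunct2[THEN conjunct1], rule conjunct2[THEN conjunct2, THEN conjunct1],
      rule conjunct2[THEN conjunct2, THEN conjunct2, THEN conjunct1],
      rule conjunct2[THEN conjunct2, THEN conjunct2, THEN conjunct2])

lemma SO_obj[simp]: "A \<in> Obj C \<Longrightarrow> SO A \<in> Obj C"
  using FP(1) by blast

lemma SM_hom: "f \<in> hom C A B \<Longrightarrow> SM f \<in> hom C (SO A) (SO B)"
  using FP(2) hom_objs by blast

lemma SM_mor[simp]: "f \<in> Mor C \<Longrightarrow> SM f \<in> Mor C"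
  and SM_dom[simp]: "f \<in> Mor C \<Longrightarrow> Dom C (SM f) = SO (Dom C f)"
  and SM_cod[simp]: "f \<in> Mor C \<Longrightarrow> Cod C (SM f) = SO (Cod C f)"
  using SM_hom[OF homI[of f]] unfolding hom_iff by auto

lemma SM_id[simp]: "A \<in> Obj C \<Longrightarrow> SM (Id C A) = Id C (SO A)"
  using FP(3) by blast

lemma SM_comp[simp]: "f \<in> Mor C \<Longrightarrow> g \<in> Mor C \<Longrightarrow> Cod C f = Dom C g \<Longrightarrow>
  SM (Comp C g f) = Comp C (SM g) (SM f)"
proof -
  assume a: "f \<in> Mor C" "g \<in> Mor C" "Cod C f = Dom C g"
  have 1: "f \<in> hom C (Dom C f) (Dom C g)" using a homI[of f] by simp
  have 2: "g \<in> hom C (Dom C g) (Cod C g)" using a homI[of g] by simp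
  show ?thesis using FP(4) 1 2 hom_objs by blast
qed

lemma SM_add[simp]: "f \<in> Mor C \<Longrightarrow> g \<in> Mor C \<Longrightarrow> Dom C g = Dom C f \<Longrightarrow> Cod C g = Cod C f \<Longrightarrow>
  SM (Add C f g) = Add C (SM f) (SM g)"
proof -
  assume a: "f \<in> Mor C" "g \<in> Mor C" "Dom C g = Dom C f" "Cod C g = Cod C f"
  have 1: "f \<in> hom C (Dom C f) (Cod C f)" using a homI[of f] by simp
  have 2: "g \<in> hom C (Dom C f) (Cod C f)" using a homI[of g] by simp
  show ?thesis using FP(5) 1 2 hom_objs by blast
qed

lemma SM_zero[simp]: assumes "A \<in> Obj C" "B \<in> Obj C" shows "SM (Zero C A B) = Zero C (SO A) (SO B)"
proof -
  have 1: "SM (Add C (Zero C A B) (Zero C A B)) = Add C (SM (Zero C A B)) (SM (Zero C A B))"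
    by (rule SM_add) (simp_all add: assms)
  have 2: "Add C (Zero C A B) (Zero C A B) = Zero C A B" using assms by simp
  have "Add C (SM (Zero C A B)) (SM (Zero C A B)) = SM (Zero C A B)" using 1 2 by simp
  moreover have "SM (Zero C A B) \<in> hom C (SO A) (SO B)" using assms by (simp add: hom_iff)
  ultimately show ?thesis using double_zero by blast
qed

lemma SM_neg[simp]: assumes "f \<in> Mor C" shows "SM (Neg C f) = Neg C (SM f)"
proof -
  have "Add C (SM f) (SM (Neg C f)) = SM (Add C f (Neg C f))" by (rule SM_add[symmetric]) (simp_all add: assms)
  also have "\<dots> = Zero C (SO (Dom C f)) (SO (Cod C f))" using assms by simp
  finally show ?thesis using assms neg_unique[of "SM f" "SO (Dom C f)" "SO (Cod C f)" "SM (Neg C f)"]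
    by (simp add: hom_iff)
qed

lemma SM_inj: "f \<in> hom C A B \<Longrightarrow> g \<in> hom C A B \<Longrightarrow> SM f = SM g \<Longrightarrow> f = g"
  using FF hom_objs unfolding fully_faithful_def bij_betw_def inj_on_def by blast

lemma SM_surj: "A \<in> Obj C \<Longrightarrow> B \<in> Obj C \<Longrightarrow> h \<in> hom C (SO A) (SO B) \<Longrightarrow> \<exists>f\<in>hom C A B. SM f = h"
proof -
  assume a: "A \<in> Obj C" "B \<in> Obj C" "h \<in> hom C (SO A) (SO B)"
  have "SM ` hom C A B = hom C (SO A) (SO B)" using FF a unfolding fully_faithful_def bij_betw_def by blast
  thus ?thesis using a(3) by (metis imageE)
qed

lemma SO_zero: "is_zero_obj C Z \<Longrightarrow> is_zero_obj C (SO Z)"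
  unfolding is_zero_obj_def by (metis SM_id SM_zero SO_obj)

lemma pres_iso: assumes "isomorphic C A B" shows "isomorphic C (SO A) (SO B)"
proof -
  obtain f g where f: "f \<in> hom C A B" "g \<in> hom C B A" "Comp C g f = Id C A" "Comp C f g = Id C B"
    using assms unfolding isomorphic_def is_iso_def by blast
  have o: "A \<in> Obj C" "B \<in> Obj C" using assms unfolding isomorphic_def by auto
  have "SM f \<in> hom C (SO A) (SO B)" "SM g \<in> hom C (SO B) (SO A)" using f SM_hom by auto
  moreover have "Comp C (SM g) (SM f) = Id C (SO A)" "Comp C (SM f) (SM g) = Id C (SO B)"
    using f o by (metis SM_comp SM_id hom_iff)+
  ultimately show ?thesis using o unfolding isomorphic_def is_iso_def by auto
qed

lemma refl_iso: assumes "A \<in> Obj C" "B \<in> Obj C" "isomorphic C (SO A) (SO B)" shows "isomorphic C A B"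
proof -
  obtain f g where f: "f \<in> hom C (SO A) (SO B)" "g \<in> hom C (SO B) (SO A)" "Comp C g f = Id C (SO A)" "Comp C f g = Id C (SO B)"
    using assms unfolding isomorphic_def is_iso_def by blast
  obtain f0 where f0: "f0 \<in> hom C A B" "SM f0 = f" using SM_surj assms f by blast
  obtain g0 where g0: "g0 \<in> hom C B A" "SM g0 = g" using SM_surj assms f by blast
  have "SM (Comp C g0 f0) = SM (Id C A)" using f f0 g0 assms by (simp add: hom_iff)
  hence 1: "Comp C g0 f0 = Id C A" using SM_inj f0 g0 assms by blast
  have "SM (Comp C f0 g0) = SM (Id C B)" using f f0 g0 assms by (simp add: hom_iff)
  hence 2: "Comp C f0 g0 = Id C B" using SM_inj f0 g0 assms by blast
  show ?thesis using assms 1 2 f0 g0 unfolding isomorphic_def is_iso_def by auto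
qed

lemma SO_bip: assumes b: "is_biproduct C S A1 A2 i1 i2 p1 p2"
  shows "is_biproduct C (SO S) (SO A1) (SO A2) (SM i1) (SM i2) (SM p1) (SM p2)"
proof -
  have bb: "S \<in> Obj C" "A1 \<in> Obj C" "A2 \<in> Obj C" "i1 \<in> hom C A1 S" "i2 \<in> hom C A2 S" "p1 \<in> hom C S A1" "p2 \<in> hom C S A2"
     "Comp C p1 i1 = Id C A1" "Comp C p2 i2 = Id C A2"
     "Comp C p1 i2 = Zero C A2 A1" "Comp C p2 i1 = Zero C A1 A2"
     "Add C (Comp C i1 p1) (Comp C i2 p2) = Id C S" using b unfolding is_biproduct_def by auto
  note h = bb(4-7)[unfolded hom_iff]
  have e: "SM (Comp C p1 i1) = Id C (SO A1)" "SM (Comp C p2 i2) = Id C (SO A2)"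
     "SM (Comp C p1 i2) = Zero C (SO A2) (SO A1)" "SM (Comp C p2 i1) = Zero C (SO A1) (SO A2)"
     "SM (Add C (Comp C i1 p1) (Comp C i2 p2)) = Id C (SO S)" using bb by simp_all
  have f: "SM (Comp C p1 i1) = Comp C (SM p1) (SM i1)" "SM (Comp C p2 i2) = Comp C (SM p2) (SM i2)"
     "SM (Comp C p1 i2) = Comp C (SM p1) (SM i2)" "SM (Comp C p2 i1) = Comp C (SM p2) (SM i1)"
     "SM (Add C (Comp C i1 p1) (Comp C i2 p2)) = Add C (Comp C (SM i1) (SM p1)) (Comp C (SM i2) (SM p2))"
    using h by simp_all
  show ?thesis using h bb e f unfolding is_biproduct_def by (simp add: hom_iff)
qed

end

context ffun begin

lemma split_zero: assumes "r \<in> hom C A B" "s \<in> hom C B A" "Comp C s r = e" "is_zero_obj C B"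
  shows "e = Zero C A A"
proof -
  have "Id C B = Zero C B B" using assms unfolding is_zero_obj_def by simp
  hence "Comp C s (Comp C (Id C B) r) = Comp C s (Comp C (Zero C B B) r)" by simp
  moreover have "A \<in> Obj C" "B \<in> Obj C" using assms hom_objs by auto
  ultimately show ?thesis using assms by (simp add: hom_iff)
qed

lemma idem_zero_obj: assumes "i \<in> hom C B S" "p \<in> hom C S B" "Comp C p i = Id C B"
  "Comp C i p = Zero C S S" shows "is_zero_obj C B"
proof -
  have o: "B \<in> Obj C" "S \<in> Obj C" using assms hom_objs by auto
  have "Id C B = Comp C (Comp C p i) (Comp C p i)" using assms o by (simp add: hom_iff)
  also have "\<dots> = Comp C p (Comp C (Comp C i p) i)" using assms(1,2) o by (simp add: hom_iff)
  also have "\<dots> = Comp C p (Comp C (Zero C S S) i)" using assms(4) by (simp only:)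
  also have "\<dots> = Zero C B B" using assms(1,2) o by (simp add: hom_iff)
  finally show ?thesis using o unfolding is_zero_obj_def by simp
qed

lemma SO_indec: assumes ic: "idempotent_complete C" and ind: "indecomposable C A"
  shows "indecomposable C (SO A)"
proof -
  have A: "A \<in> Obj C" "\<not> is_zero_obj C A"
    and indA: "\<And>B1 B2 i1 i2 p1 p2. is_biproduct C A B1 B2 i1 i2 p1 p2 \<Longrightarrow> is_zero_obj C B1 \<or> is_zero_obj C B2"
    using ind unfolding indecomposable_def by blast+
  have nz: "\<not> is_zero_obj C (SO A)"
  proof
    assume "is_zero_obj C (SO A)"
    hence "SM (Id C A) = SM (Zero C A A)" using A unfolding is_zero_obj_def by simp
    hence "Id C A = Zero C A A" using SM_inj A by (metis id_hom zero_hom)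
    thus False using A unfolding is_zero_obj_def by simp
  qed
  have "is_zero_obj C B1 \<or> is_zero_obj C B2" if b: "is_biproduct C (SO A) B1 B2 i1 i2 p1 p2" for B1 B2 i1 i2 p1 p2
  proof (rule ccontr)
    assume nzB: "\<not> (is_zero_obj C B1 \<or> is_zero_obj C B2)"
    have bb: "B1 \<in> Obj C" "B2 \<in> Obj C" "i1 \<in> hom C B1 (SO A)" "i2 \<in> hom C B2 (SO A)" "p1 \<in> hom C (SO A) B1" "p2 \<in> hom C (SO A) B2"
     "Comp C p1 i1 = Id C B1" "Comp C p2 i2 = Id C B2"
     "Comp C p1 i2 = Zero C B2 B1" "Comp C p2 i1 = Zero C B1 B2"
     "Add C (Comp C i1 p1) (Comp C i2 p2) = Id C (SO A)" using b unfolding is_biproduct_def by auto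
    note h = bb(3-6)[unfolded hom_iff]
    note r = assoc_rule[OF bb(7)] assoc_rule[OF bb(8)] assoc_rule[OF bb(9)] assoc_rule[OF bb(10)]
    have eh: "Comp C i1 p1 \<in> hom C (SO A) (SO A)" "Comp C i2 p2 \<in> hom C (SO A) (SO A)"
      using h by (simp_all add: hom_iff)
    obtain e0 where e0: "e0 \<in> hom C A A" "SM e0 = Comp C i1 p1" using SM_surj A eh by blast
    obtain e1 where e1: "e1 \<in> hom C A A" "SM e1 = Comp C i2 p2" using SM_surj A eh by blast
    note eh' = e0(1)[unfolded hom_iff] e1(1)[unfolded hom_iff]
    have "SM (Comp C e0 e0) = SM e0" using h eh' e0 bb by (simp add: r)
    hence i0: "Comp C e0 e0 = e0" using SM_inj e0 by (meson comp_hom)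
    have "SM (Comp C e1 e1) = SM e1" using h eh' e1 bb by (simp add: r)
    hence i1: "Comp C e1 e1 = e1" using SM_inj e1 by (meson comp_hom)
    have "SM (Add C e0 e1) = SM (Id C A)" using h eh' e0 e1 bb A by simp
    hence s01: "Add C e0 e1 = Id C A" using SM_inj e0 e1 A by (meson add_hom id_hom)
    have "SM (Comp C e0 e1) = SM (Zero C A A)" using h eh' e0 e1 bb A by (simp add: r)
    hence z01: "Comp C e0 e1 = Zero C A A" using SM_inj e0 e1 A by (meson comp_hom zero_hom)
    have "SM (Comp C e1 e0) = SM (Zero C A A)" using h eh' e0 e1 bb A by (simp add: r)
    hence z10: "Comp C e1 e0 = Zero C A A" using SM_inj e0 e1 A by (meson comp_hom zero_hom)
    obtain B' r s where rs: "B' \<in> Obj C" "r \<in> hom C A B'" "s \<in> hom C B' A" "Comp C s r = e0" "Comp C r s = Id C B'"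
      using ic i0 e0 A unfolding idempotent_complete_def by blast
    obtain B'' r' s' where rs': "B'' \<in> Obj C" "r' \<in> hom C A B''" "s' \<in> hom C B'' A" "Comp C s' r' = e1" "Comp C r' s' = Id C B''"
      using ic i1 e1 A unfolding idempotent_complete_def by blast
    note hr = rs(2,3)[unfolded hom_iff] rs'(2,3)[unfolded hom_iff]
    note rr = assoc_rule[OF rs(4)] assoc_rule[OF rs(5)] assoc_rule[OF rs'(4)] assoc_rule[OF rs'(5)]
      assoc_rule[OF z01] assoc_rule[OF z10]
    have rr1: "Comp C r e0 = r" using hr rs by (simp add: rr flip: rs(4))
    have rr2: "Comp C e1 s' = s'" using hr rs' by (simp add: rr flip: rs'(4))
    have rr3: "Comp C r' e1 = r'" using hr rs' by (simp add: rr flip: rs'(4))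
    have rr4: "Comp C e0 s = s" using hr rs by (simp add: rr flip: rs(4))
    have "Comp C r s' = Comp C (Comp C r e0) (Comp C e1 s')" using rr1 rr2 by simp
    also have "\<dots> = Zero C B'' B'" using hr eh' rs rs' A by (simp add: rr)
    finally have z1: "Comp C r s' = Zero C B'' B'" .
    have "Comp C r' s = Comp C (Comp C r' e1) (Comp C e0 s)" using rr3 rr4 by simp
    also have "\<dots> = Zero C B' B''" using hr eh' rs rs' A by (simp add: rr)
    finally have z2: "Comp C r' s = Zero C B' B''" .
    have "is_biproduct C A B' B'' s s' r r'"
      unfolding is_biproduct_def using A rs rs' z1 z2 s01 by simp
    hence "is_zero_obj C B' \<or> is_zero_obj C B''" by (rule indA)
    thus False
    proof
      assume "is_zero_obj C B'"
      hence "e0 = Zero C A A" using split_zero rs by blast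
      hence "Comp C i1 p1 = Zero C (SO A) (SO A)" using e0 A by simp
      hence "is_zero_obj C B1" using idem_zero_obj bb by blast
      thus False using nzB by blast
    next
      assume "is_zero_obj C B''"
      hence "e1 = Zero C A A" using split_zero rs' by blast
      hence "Comp C i2 p2 = Zero C (SO A) (SO A)" using e1 A by simp
      hence "is_zero_obj C B2" using idem_zero_obj bb by blast
      thus False using nzB by blast
    qed
  qed
  thus ?thesis using nz A unfolding indecomposable_def by simp
qed

end

context ffun begin

definition cls :: "'o \<Rightarrow> 'o set" where "cls X = {Y. isomorphic C X Y}"

lemma cls_eq_iso: assumes "isomorphic C A B" shows "cls A = cls B"
  unfolding cls_def using assms iso_sym iso_trans by blast

lemma cls_eq_D: assumes "B \<in> Obj C" "cls A = cls B" shows "isomorphic C A B"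
proof -
  have "B \<in> cls B" unfolding cls_def using iso_refl assms by blast
  thus ?thesis using assms unfolding cls_def by blast
qed

lemma indec_obj: "indecomposable C A \<Longrightarrow> A \<in> Obj C" unfolding indecomposable_def by blast

lemma indec_ess:
  assumes ic: "idempotent_complete C" and af: "additively_finite C" and X: "indecomposable C X"
  shows "\<exists>A\<in>Obj C. isomorphic C X (SO A)"
proof -
  obtain F where F: "finite F" "F \<subseteq> Obj C" "\<And>A. indecomposable C A \<Longrightarrow> \<exists>B\<in>F. isomorphic C A B"
    using af unfolding additively_finite_def by blast
  define IND where "IND = {A. indecomposable C A}"
  define K where "K = cls ` IND"
  define phi where "phi k = cls (SO (SOME A. A \<in> IND \<and> cls A = k))" for k
  have "K \<subseteq> cls ` F"
  proof
    fix k assume "k \<in> K"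
    then obtain A where A: "A \<in> IND" "k = cls A" unfolding K_def by blast
    then obtain B where "B \<in> F" "isomorphic C A B" using F(3) unfolding IND_def by blast
    thus "k \<in> cls ` F" using A cls_eq_iso by blast
  qed
  hence fin: "finite K" using F(1) finite_surj by blast
  have phi_cls: "phi (cls A) = cls (SO A)" if "A \<in> IND" for A
  proof -
    let ?A = "SOME A'. A' \<in> IND \<and> cls A' = cls A"
    have "?A \<in> IND \<and> cls ?A = cls A" by (rule someI[of _ A]) (simp add: that)
    hence "isomorphic C ?A A" using cls_eq_D that indec_obj unfolding IND_def by blast
    hence "cls (SO ?A) = cls (SO A)" using pres_iso cls_eq_iso by blast
    thus ?thesis unfolding phi_def by simp
  qed
  have sub: "phi ` K \<subseteq> K"
  proof
    fix k assume "k \<in> phi ` K"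
    then obtain A where A: "A \<in> IND" "k = phi (cls A)" unfolding K_def by blast
    hence "k = cls (SO A)" using phi_cls by simp
    moreover have "SO A \<in> IND" using A SO_indec ic unfolding IND_def by blast
    ultimately show "k \<in> K" unfolding K_def by blast
  qed
  have inj: "inj_on phi K"
  proof (rule inj_onI)
    fix k k' assume "k \<in> K" "k' \<in> K" and eq: "phi k = phi k'"
    then obtain A A' where A: "A \<in> IND" "k = cls A" "A' \<in> IND" "k' = cls A'" unfolding K_def by blast
    hence "cls (SO A) = cls (SO A')" using eq phi_cls by simp
    hence "isomorphic C (SO A) (SO A')" using cls_eq_D A indec_obj SO_obj unfolding IND_def by blast
    hence "isomorphic C A A'" using refl_iso A indec_obj unfolding IND_def by blast
    thus "k = k'" using A cls_eq_iso by simp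
  qed
  have "phi ` K = K" using endo_inj_surj[OF fin sub inj] .
  moreover have "cls X \<in> K" using X unfolding K_def IND_def by blast
  ultimately obtain k where k: "k \<in> K" "cls X = phi k" by (metis imageE)
  then obtain A where A: "A \<in> IND" "k = cls A" unfolding K_def by blast
  hence "cls X = cls (SO A)" using k phi_cls by simp
  hence "isomorphic C X (SO A)" using cls_eq_D A indec_obj SO_obj unfolding IND_def by blast
  thus ?thesis using A indec_obj unfolding IND_def by blast
qed

lemma ess_surj:
  assumes ic: "idempotent_complete C" and ad: "is_additive C" and af: "additively_finite C"
  shows "essentially_surjective C SO"
proof -
  have "\<exists>A\<in>Obj C. isomorphic C X (SO A)" if "fin_dsum_indec C X" for X
    using that
  proof (induction rule: fin_dsum_indec.induct)
    case (zero Z0)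
    hence "is_zero_obj C (SO Z0)" using SO_zero by blast
    hence "isomorphic C Z0 (SO Z0)" using zero zero_objs_iso by blast
    thus ?case using zero unfolding is_zero_obj_def by blast
  next
    case (indec A)
    thus ?case using indec_ess ic af by blast
  next
    case (sum S A1 A2 i1 i2 p1 p2)
    obtain B1 B2 where B: "B1 \<in> Obj C" "isomorphic C A1 (SO B1)" "B2 \<in> Obj C" "isomorphic C A2 (SO B2)"
      using sum by blast
    obtain T j1 j2 q1 q2 where T: "is_biproduct C T B1 B2 j1 j2 q1 q2"
      using ad B unfolding is_additive_def by blast
    have "is_biproduct C (SO T) (SO B1) (SO B2) (SM j1) (SM j2) (SM q1) (SM q2)" using SO_bip T by blast
    hence "isomorphic C S (SO T)" using bip_iso sum(1) B by blast
    moreover have "T \<in> Obj C" using T unfolding is_biproduct_def by blast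
    ultimately show ?case by blast
  qed
  hence "\<forall>X\<in>Obj C. \<exists>A\<in>Obj C. isomorphic C X (SO A)" using af unfolding additively_finite_def by blast
  thus ?thesis unfolding essentially_surjective_def ess_image_def by blast
qed

end

lemma add_sub_cancel: assumes "a \<in> hom C A B" "b \<in> hom C A B" "pa C"
  shows "Add C a (Add C b (Neg C a)) = b"
proof -
  interpret pa C by (rule assms(3))
  have "Add C a (Add C b (Neg C a)) = Add C a (Add C (Neg C a) b)" using assms add_comm by (metis neg_hom)
  also have "\<dots> = Add C (Add C a (Neg C a)) b" using assms by (metis add_assoc neg_hom)
  also have "\<dots> = b" using assms by (simp add: hom_iff)
  finally show ?thesis .
qed

locale rt = ffun C SO SM for C :: "('o,'m) addcat" and SO SM +
  fixes Delta :: "('o,'m) tri set"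
  assumes RT: "right_triangulated C SO SM Delta"
begin

lemma RTs0: "is_additive C"
  using RT unfolding right_triangulated_def by (elim conjE) assumption

lemma RTs1: "(\<forall>T\<in>Delta. is_tri C SO T)"
  using RT unfolding right_triangulated_def by (elim conjE) assumption

lemma RTs2: "(\<forall>T\<in>Delta. \<forall>T' a b c. is_tri C SO T' \<and> tri_iso C SO SM T T' a b c \<longrightarrow> T' \<in> Delta)"
  using RT unfolding right_triangulated_def by (elim conjE) assumption

lemma RTs3: "(\<forall>A\<in>Obj C. \<forall>Z0. is_zero_obj C Z0 \<longrightarrow>
        (A, A, Z0, Id C A, Zero C A Z0, Zero C Z0 (SO A)) \<in> Delta)"
  using RT unfolding right_triangulated_def by (elim conjE) assumption

lemma RTs4: "(\<forall>A\<in>Obj C. \<forall>B\<in>Obj C. \<forall>x\<in>hom C A B. \<exists>D y z. (A,B,D,x,y,z) \<in> Delta)"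
  using RT unfolding right_triangulated_def by (elim conjE) assumption

lemma RTs5: "(\<forall>A B D x y z. (A,B,D,x,y,z) \<in> Delta \<longrightarrow> (B, D, SO A, y, z, Neg C (SM x)) \<in> Delta)"
  using RT unfolding right_triangulated_def by (elim conjE) assumption

lemma RTs6: "(\<forall>A B D x y z A' B' D' x' y' z' a b.
        (A,B,D,x,y,z) \<in> Delta \<and> (A',B',D',x',y',z') \<in> Delta \<and>
        a \<in> hom C A A' \<and> b \<in> hom C B B' \<and> Comp C b x = Comp C x' a \<longrightarrow>
        (\<exists>c. tri_morph C SO SM (A,B,D,x,y,z) (A',B',D',x',y',z') a b c))"
  using RT unfolding right_triangulated_def by (elim conjE) assumption

lemmas RTs = RTs0 RTs1 RTs2 RTs3 RTs4 RTs5 RTs6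

lemma D_tri: "(A,B,D,x,y,z) \<in> Delta \<Longrightarrow> A \<in> Obj C \<and> B \<in> Obj C \<and> D \<in> Obj C \<and>
     x \<in> hom C A B \<and> y \<in> hom C B D \<and> z \<in> hom C D (SO A)"
  using RTs(2) unfolding is_tri_def by fastforce

lemma D_rot: "(A,B,D,x,y,z) \<in> Delta \<Longrightarrow> (B, D, SO A, y, z, Neg C (SM x)) \<in> Delta"
  using RTs(6) by blast

lemma D_morph: "(A,B,D,x,y,z) \<in> Delta \<Longrightarrow> (A',B',D',x',y',z') \<in> Delta \<Longrightarrow>
        a \<in> hom C A A' \<Longrightarrow> b \<in> hom C B B' \<Longrightarrow> Comp C b x = Comp C x' a \<Longrightarrow>
        \<exists>c. c \<in> hom C D D' \<and> Comp C c y = Comp C y' b \<and> Comp C (SM a) z = Comp C z' c"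
  using RTs(7) unfolding tri_morph_def by fastforce

lemma ex_zero: "\<exists>Z0. is_zero_obj C Z0" using RTs(1) unfolding is_additive_def by blast

lemma D_triv: "A \<in> Obj C \<Longrightarrow> is_zero_obj C Z0 \<Longrightarrow> (A, A, Z0, Id C A, Zero C A Z0, Zero C Z0 (SO A)) \<in> Delta"
  using RTs(4) by blast

lemma comp_zero_tri: assumes T: "(X,Y,Z,u,v,w) \<in> Delta" shows "Comp C v u = Zero C X Z"
proof -
  obtain Z0 where Z0: "is_zero_obj C Z0" using ex_zero by blast
  have t: "X \<in> Obj C" "Y \<in> Obj C" "Z \<in> Obj C" "u \<in> hom C X Y" "v \<in> hom C Y Z" "w \<in> hom C Z (SO X)"
    using D_tri[OF T] by auto
  have z: "Z0 \<in> Obj C" using Z0 unfolding is_zero_obj_def by auto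
  obtain c where c: "c \<in> hom C Z0 Z" "Comp C c (Zero C X Z0) = Comp C v u"
    using D_morph[OF D_triv[OF t(1) Z0] T, of "Id C X" u] t by (auto simp: hom_iff)
  thus ?thesis using t z by (simp add: hom_iff)
qed

lemma exact_tri: assumes T: "(X,Y,Z,u,v,w) \<in> Delta" and f: "f \<in> hom C W Y" "Comp C v f = Zero C W Z"
  shows "\<exists>k\<in>hom C W X. f = Comp C u k"
proof -
  obtain Z0 where Z0: "is_zero_obj C Z0" using ex_zero by blast
  have t: "X \<in> Obj C" "Y \<in> Obj C" "Z \<in> Obj C" "u \<in> hom C X Y" "v \<in> hom C Y Z" "w \<in> hom C Z (SO X)"
    using D_tri[OF T] by auto
  have z: "Z0 \<in> Obj C" using Z0 unfolding is_zero_obj_def by auto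
  have W: "W \<in> Obj C" using f hom_objs by blast
  have R0: "(W, Z0, SO W, Zero C W Z0, Zero C Z0 (SO W), Neg C (SM (Id C W))) \<in> Delta"
    using D_rot[OF D_triv[OF W Z0]] by simp
  obtain c where c: "c \<in> hom C (SO W) (SO X)" "Comp C (SM f) (Neg C (SM (Id C W))) = Comp C (Neg C (SM u)) c"
    using D_morph[OF R0 D_rot[OF T], of f "Zero C Z0 Z"] t f z W by (auto simp: hom_iff)
  have "Neg C (SM f) = Neg C (Comp C (SM u) c)" using c t f W by (simp add: hom_iff)
  hence "Neg C (Neg C (SM f)) = Neg C (Neg C (Comp C (SM u) c))" by simp
  hence e: "SM f = Comp C (SM u) c" using c t f W by (simp add: hom_iff)
  obtain k where k: "k \<in> hom C W X" "SM k = c" using SM_surj c W t by blast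
  have "SM f = SM (Comp C u k)" using e k t by (simp add: hom_iff)
  hence "f = Comp C u k" using SM_inj f k t by (meson comp_hom)
  thus ?thesis using k by blast
qed

end

context pa begin
lemma c_negzero[simp]: "A \<in> Obj C \<Longrightarrow> B \<in> Obj C \<Longrightarrow> Neg C (Zero C A B) = Zero C A B"
  using neg_unique[of "Zero C A B" A B "Zero C A B"] by simp
end

context rt begin

lemma five:
  assumes P: "(X,Y,Z,u,v,w) \<in> Delta" and P': "(X,Y,Z',u,v',w') \<in> Delta"
    and c: "c \<in> hom C Z Z'" and cv: "Comp C c v = v'" and cw: "w = Comp C w' c"
  shows "is_iso C Z Z' c"
proof -
  have t: "X \<in> Obj C" "Y \<in> Obj C" "Z \<in> Obj C" "u \<in> hom C X Y" "v \<in> hom C Y Z" "w \<in> hom C Z (SO X)"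
    using D_tri[OF P] by auto
  have t': "Z' \<in> Obj C" "v' \<in> hom C Y Z'" "w' \<in> hom C Z' (SO X)"
    using D_tri[OF P'] by auto
  note h = t(4-6)[unfolded hom_iff] t'(2,3)[unfolded hom_iff] c[unfolded hom_iff]
  have RP: "(Y,Z,SO X,v,w,Neg C (SM u)) \<in> Delta" using D_rot[OF P] .
  have RP': "(Y,Z',SO X,v',w',Neg C (SM u)) \<in> Delta" using D_rot[OF P'] .
  have RRP: "(Z,SO X,SO Y,w,Neg C (SM u),Neg C (SM v)) \<in> Delta" using D_rot[OF RP] .
  have RRP': "(Z',SO X,SO Y,w',Neg C (SM u),Neg C (SM v')) \<in> Delta" using D_rot[OF RP'] .
  have z1: "Comp C (Neg C (SM u)) w' = Zero C Z' (SO Y)" using comp_zero_tri[OF RRP'] .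
  have zvu: "Comp C v u = Zero C X Z" using comp_zero_tri[OF P] .
  have "Neg C (Neg C (Comp C (SM u) w')) = Neg C (Zero C Z' (SO Y))" using z1 h t by simp
  hence z1': "Comp C (SM u) w' = Zero C Z' (SO Y)" using h t t' by simp
  note r = assoc_rule[OF z1'] assoc_rule[OF cw[symmetric]] assoc_rule[OF cv] assoc_rule[OF zvu]
  have surj: "\<exists>h\<in>hom C W Z. Comp C c h = g" if g: "g \<in> hom C W Z'" for W g
  proof -
    have W: "W \<in> Obj C" using g hom_objs by blast
    note hg = g[unfolded hom_iff]
    have "Comp C (Neg C (SM u)) (Comp C w' g) = Zero C W (SO Y)" using h hg W t t' by (simp add: r)
    moreover have "Comp C w' g \<in> hom C W (SO X)" using h hg W t by (simp add: hom_iff)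
    ultimately obtain h1 where h1: "h1 \<in> hom C W Z" "Comp C w' g = Comp C w h1"
      using exact_tri[OF RRP] by blast
    note hh1 = h1(1)[unfolded hom_iff]
    define d where "d = Add C g (Neg C (Comp C c h1))"
    have dh: "d \<in> hom C W Z'" using hh1 hg h unfolding d_def by (simp add: hom_iff)
    have "Comp C w' d = Add C (Comp C w' g) (Neg C (Comp C w h1))"
      unfolding d_def using hh1 hg h by (simp add: r)
    also have "\<dots> = Zero C W (SO X)" using h1 hh1 h by simp
    finally obtain k where k: "k \<in> hom C W Y" "d = Comp C v' k"
      using exact_tri[OF RP' dh] by blast
    note hk = k(1)[unfolded hom_iff]
    have "g = Add C (Comp C c h1) d" unfolding d_def
      using add_sub_cancel[of "Comp C c h1" C W Z' g] hh1 hg h pa_axioms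
      by (simp add: hom_iff)
    also have "\<dots> = Comp C c (Add C h1 (Comp C v k))" using k(2) hk hh1 h by (simp add: r)
    finally have "Comp C c (Add C h1 (Comp C v k)) = g" by simp
    moreover have "Add C h1 (Comp C v k) \<in> hom C W Z" using hk hh1 h by (simp add: hom_iff)
    ultimately show ?thesis by blast
  qed
  have inj: "h = Zero C W Z" if hh: "h \<in> hom C W Z" "Comp C c h = Zero C W Z'" for W h
  proof -
    have W: "W \<in> Obj C" using hh hom_objs by blast
    note hh' = hh(1)[unfolded hom_iff]
    have "Comp C w h = Comp C w' (Comp C c h)" using h hh' by (simp add: r)
    also have "\<dots> = Zero C W (SO X)" using hh h W by simp
    finally obtain k where k: "k \<in> hom C W Y" "h = Comp C v k" using exact_tri[OF RP hh(1)] by blast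
    note hk = k(1)[unfolded hom_iff]
    have "Comp C v' k = Comp C c h" using k hk h by (simp add: r)
    hence "Comp C v' k = Zero C W Z'" using hh by simp
    then obtain m where m: "m \<in> hom C W X" "k = Comp C u m" using exact_tri[OF P' k(1)] by blast
    note hm = m(1)[unfolded hom_iff]
    show "h = Zero C W Z" using k(2) m(2) hm h t W by (simp add: r)
  qed
  obtain g where g: "g \<in> hom C Z' Z" "Comp C c g = Id C Z'" using surj[of "Id C Z'" Z'] t' by auto
  note hg = g(1)[unfolded hom_iff]
  have "Comp C c (Add C (Comp C g c) (Neg C (Id C Z))) = Add C c (Neg C c)"
    using hg h t by (simp add: assoc_rule[OF g(2)])
  also have "\<dots> = Zero C Z Z'" using h by simp
  finally have eq: "Add C (Comp C g c) (Neg C (Id C Z)) = Zero C Z Z"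
    using inj[of "Add C (Comp C g c) (Neg C (Id C Z))" Z] hg h t by (simp add: hom_iff)
  have cg: "Comp C g c \<in> hom C Z Z" using hg h by (simp add: hom_iff)
  have "Comp C g c = Id C Z" by (rule sub_zero[OF cg id_hom[OF t(3)] eq])
  thus ?thesis unfolding is_iso_def using g c by blast
qed

end

context rt begin

lemma is_iso_id: "A \<in> Obj C \<Longrightarrow> is_iso C A A (Id C A)"
  unfolding is_iso_def by (intro conjI bexI[of _ "Id C A"]) auto

lemma left_rot:
  assumes tri: "is_tri C SO (A,B,D,x,y,z)" and T1: "(B,D,SO A,y,z,Neg C (SM x)) \<in> Delta"
  shows "(A,B,D,x,y,z) \<in> Delta"
proof -
  have t: "A \<in> Obj C" "B \<in> Obj C" "D \<in> Obj C" "x \<in> hom C A B" "y \<in> hom C B D" "z \<in> hom C D (SO A)"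
    using tri unfolding is_tri_def by auto
  obtain D' y' z' where T: "(A,B,D',x,y',z') \<in> Delta" using RTs4 t by blast
  have t': "D' \<in> Obj C" "y' \<in> hom C B D'" "z' \<in> hom C D' (SO A)" using D_tri[OF T] by auto
  note h = t(4-6)[unfolded hom_iff] t'(2,3)[unfolded hom_iff]
  have P: "(SO A, SO B, SO D', Neg C (SM x), Neg C (SM y'), Neg C (SM z')) \<in> Delta"
    using D_rot[OF D_rot[OF D_rot[OF T]]] .
  have P': "(SO A, SO B, SO D, Neg C (SM x), Neg C (SM y), Neg C (SM z)) \<in> Delta"
    using D_rot[OF D_rot[OF T1]] .
  obtain c where c: "c \<in> hom C (SO D') (SO D)"
    "Comp C c (Neg C (SM y')) = Comp C (Neg C (SM y)) (Id C (SO B))"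
    "Comp C (SM (Id C (SO A))) (Neg C (SM z')) = Comp C (Neg C (SM z)) c"
    using D_morph[OF P P', of "Id C (SO A)" "Id C (SO B)"] t h by (auto simp: hom_iff)
  note hc = c(1)[unfolded hom_iff]
  have cv: "Comp C c (Neg C (SM y')) = Neg C (SM y)" using c(2) h hc t by simp
  have cw: "Neg C (SM z') = Comp C (Neg C (SM z)) c" using c(3) h hc t by simp
  have iso: "is_iso C (SO D') (SO D) c" by (rule five[OF P P' c(1) cv cw])
  then obtain g where g: "g \<in> hom C (SO D) (SO D')" "Comp C g c = Id C (SO D')" "Comp C c g = Id C (SO D)"
    unfolding is_iso_def by blast
  obtain c0 where c0: "c0 \<in> hom C D' D" "SM c0 = c" using SM_surj c t t' by blast
  obtain g0 where g0: "g0 \<in> hom C D D'" "SM g0 = g" using SM_surj g t t' by blast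
  note hc0 = c0(1)[unfolded hom_iff] g0(1)[unfolded hom_iff]
  have "SM (Comp C g0 c0) = SM (Id C D')" using g c0 g0 hc0 t' by simp
  hence gc: "Comp C g0 c0 = Id C D'" using SM_inj c0 g0 t' by (meson comp_hom id_hom)
  have "SM (Comp C c0 g0) = SM (Id C D)" using g c0 g0 hc0 t by simp
  hence cg: "Comp C c0 g0 = Id C D" using SM_inj c0 g0 t by (meson comp_hom id_hom)
  have "Neg C (Neg C (Comp C c (SM y'))) = Neg C (Neg C (SM y))" using cv h hc by simp
  hence "SM (Comp C c0 y') = SM y" using h hc hc0 c0 by simp
  hence e1: "Comp C c0 y' = y" using SM_inj c0 t t' by (meson comp_hom)
  have "Neg C (Neg C (SM z')) = Neg C (Neg C (Comp C (SM z) c))" using cw h hc by simp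
  hence "SM z' = SM (Comp C z c0)" using h hc hc0 c0 by simp
  hence e2: "z' = Comp C z c0" using SM_inj c0 t t' by (meson comp_hom)
  have i3: "is_iso C D' D c0" unfolding is_iso_def using c0(1) g0(1) gc cg by blast
  have m: "tri_morph C SO SM (A,B,D',x,y',z') (A,B,D,x,y,z) (Id C A) (Id C B) c0"
    unfolding tri_morph_def using t h hc0 c0(1) e1 e2 by (simp add: hom_iff)
  have "tri_iso C SO SM (A,B,D',x,y',z') (A,B,D,x,y,z) (Id C A) (Id C B) c0"
    unfolding tri_iso_def using m i3 is_iso_id t by simp
  thus ?thesis using RTs2 T tri by blast
qed

end

theorem mainTheorem13:
  fixes C :: "('o,'m) addcat" and SO :: "'o \<Rightarrow> 'o" and SM :: "'m \<Rightarrow> 'm"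
    and Delta :: "('o,'m) tri set"
  assumes "right_triangulated C SO SM Delta"
    and "right_semi_equivalence C SO SM Delta"
    and "idempotent_complete C"
    and "additively_finite C"
  shows "autoequivalence C SO SM \<and> triangulated C SO SM Delta"
proof -
  have ad: "is_additive C" and F: "additive_endofunctor C SO SM"
    using assms(1) unfolding right_triangulated_def by blast+
  have FF: "fully_faithful C SO SM" using assms(2) unfolding right_semi_equivalence_def by blast
  have p: "pa C" unfolding pa_def using ad unfolding is_additive_def by blast
  interpret rt C SO SM Delta
    by (intro rt.intro ffun.intro ffun_axioms.intro rt_axioms.intro p F FF assms(1))
  have ae: "autoequivalence C SO SM"
    unfolding autoequivalence_def using F FF ess_surj[OF assms(3) ad assms(4)] by blast
  moreover have "triangulated C SO SM Delta"
    unfolding triangulated_def using assms(1) ae left_rot by blast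
  ultimately show ?thesis by blast
qed


end
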